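(* Let $(A,B)$ be a random vector, $(A_n,B_n)_{n\in\mathbb N}$ i.i.d. copies, $X=\sum_{k\ge1}\Pi_{k-1}B_k$ with $|X|<\infty$ a.s. Assume $\mathbb P\{A=0\}=0$, $\mathbb P\{B=0\}<1$, $\mathbb P\{B+Ac=c\}<1$ for all $c\in\mathbb R$, and $\mathbb P\{A\in(0,1]\}=1$. If $\mathbb E e^{rX}<\infty$ for some $r>0$, then $\mathbb E e^{rB}\mathbf 1_{\{A=1\}}<1$ (regardless of whether the support of the distribution of $X$ is bounded from the right).
   Context: $\Pi_0:=1$, $\Pi_n:=A_1\cdots A_n$. *)

theory Defs
  imports "HOL-Probability.Probability"
begin

text \<open>Perpetuity X = sum over k of (A_0 ... A_(k-1)) B_k, indices shifted to start at 0.\<close>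
definition perpetuity :: "(nat \<Rightarrow> 'a \<Rightarrow> real) \<Rightarrow> (nat \<Rightarrow> 'a \<Rightarrow> real) \<Rightarrow> 'a \<Rightarrow> real" where
  "perpetuity As Bs \<omega> = (\<Sum>k. (\<Prod>i<k. As i \<omega>) * Bs k \<omega>)"

end

theory Submission
  imports Defs
begin

lemma summable_real_Cauchy:
  "summable (g::nat\<Rightarrow>real) \<longleftrightarrow>
   (\<forall>j::nat. \<exists>N::nat. \<forall>m\<ge>N. \<forall>n\<ge>N. \<bar>(\<Sum>i<m. g i) - (\<Sum>i<n. g i)\<bar> < 1 / Suc j)"
proof -
  have "summable g \<longleftrightarrow> Cauchy (\<lambda>n. \<Sum>i<n. g i)"
    by (simp add: summable_iff_convergent Cauchy_convergent_iff)
  also have "\<dots> \<longleftrightarrow> (\<forall>j::nat. \<exists>N::nat. \<forall>m\<ge>N. \<forall>n\<ge>N. \<bar>(\<Sum>i<m. g i) - (\<Sum>i<n. g i)\<bar> < 1 / Suc j)"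
    unfolding Cauchy_iff real_norm_def
  proof (intro iffI allI)
    fix j :: nat assume H: "\<forall>e>0. \<exists>M. \<forall>m\<ge>M. \<forall>n\<ge>M. \<bar>(\<Sum>i<m. g i) - (\<Sum>i<n. g i)\<bar> < e"
    show "\<exists>N::nat. \<forall>m\<ge>N. \<forall>n\<ge>N. \<bar>(\<Sum>i<m. g i) - (\<Sum>i<n. g i)\<bar> < 1 / Suc j"
      using H[rule_format, of "1 / Suc j"] by simp
  next
    fix e :: real
    assume H: "\<forall>j::nat. \<exists>N::nat. \<forall>m\<ge>N. \<forall>n\<ge>N. \<bar>(\<Sum>i<m. g i) - (\<Sum>i<n. g i)\<bar> < 1 / Suc j"
    show "e > 0 \<longrightarrow> (\<exists>M. \<forall>m\<ge>M. \<forall>n\<ge>M. \<bar>(\<Sum>i<m. g i) - (\<Sum>i<n. g i)\<bar> < e)"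
    proof
      assume "e > 0"
      then obtain j :: nat where j: "1 / Suc j < e"
        using nat_approx_posE by blast
      from H obtain N where "\<forall>m\<ge>N. \<forall>n\<ge>N. \<bar>(\<Sum>i<m. g i) - (\<Sum>i<n. g i)\<bar> < 1 / Suc j" by blast
      then show "\<exists>M. \<forall>m\<ge>M. \<forall>n\<ge>M. \<bar>(\<Sum>i<m. g i) - (\<Sum>i<n. g i)\<bar> < e"
        using j by (meson less_trans)
    qed
  qed
  finally show ?thesis .
qed

lemma pred_summable[measurable]:
  fixes f :: "nat \<Rightarrow> 'a \<Rightarrow> real"
  assumes [measurable]: "\<And>i. f i \<in> borel_measurable M"
  shows "Measurable.pred M (\<lambda>x. summable (\<lambda>i. f i x))"
  unfolding summable_real_Cauchy by measurable


lemma perp_shift: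
  fixes s :: "real \<times> real" and \<omega> :: "nat \<Rightarrow> real \<times> real"
  assumes sm: "summable (\<lambda>k. (\<Prod>i<k. fst (case_nat s \<omega> i)) * snd (case_nat s \<omega> k))"
  shows "(\<Sum>k. (\<Prod>i<k. fst (case_nat s \<omega> i)) * snd (case_nat s \<omega> k))
       = snd s + fst s * (\<Sum>k. (\<Prod>i<k. fst (\<omega> i)) * snd (\<omega> k))"
proof -
  let ?f = "\<lambda>k. (\<Prod>i<k. fst (case_nat s \<omega> i)) * snd (case_nat s \<omega> k)"
  let ?g = "\<lambda>k. (\<Prod>i<k. fst (\<omega> i)) * snd (\<omega> k)"
  have fS: "?f (Suc k) = fst s * ?g k" for k
  proof -
    have "(\<Prod>i<Suc k. fst (case_nat s \<omega> i)) = fst (case_nat s \<omega> 0) * (\<Prod>i<k. fst (case_nat s \<omega> (Suc i)))"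
      by (rule prod.lessThan_Suc_shift)
    then show ?thesis by (simp only: mult.assoc) simp
  qed
  have f0: "?f 0 = snd s" by simp
  have "(\<Sum>k. ?f (Suc k)) = suminf ?f - ?f 0"
    using suminf_split_head[OF sm] .
  then have eq: "suminf ?f = snd s + (\<Sum>k. fst s * ?g k)"
    unfolding fS f0 by simp
  show ?thesis
  proof (cases "fst s = 0")
    case True
    then show ?thesis using eq by simp
  next
    case False
    have "summable (\<lambda>k. ?f (Suc k))" by (rule summable_Suc_iff[THEN iffD2, OF sm])
    then have "summable (\<lambda>k. fst s * ?g k)" unfolding fS .
    then have "summable ?g" using False by (simp add: summable_cmult_iff)
    then show ?thesis using eq suminf_mult[of ?g "fst s"] by simp
  qed
qed


lemma (in sequence_space) not_AE_tendsto_zero: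
  fixes g :: "'a \<Rightarrow> real"
  assumes g[measurable]: "g \<in> borel_measurable M"
    and pos: "emeasure M {x\<in>space M. g x \<noteq> 0} \<noteq> 0"
  shows "\<not> (AE \<omega> in S. (\<lambda>k. g (\<omega> k)) \<longlonglongrightarrow> 0)"
proof
  assume AEt: "AE \<omega> in S. (\<lambda>k. g (\<omega> k)) \<longlonglongrightarrow> 0"
  obtain j :: nat where j: "emeasure M {x\<in>space M. 1 / Suc j < \<bar>g x\<bar>} \<noteq> 0"
  proof (rule ccontr)
    assume "\<not> thesis"
    with that have z: "\<And>j::nat. emeasure M {x\<in>space M. 1 / Suc j < \<bar>g x\<bar>} = 0" by blast
    have "(\<Union>j::nat. {x\<in>space M. 1 / Suc j < \<bar>g x\<bar>}) \<in> null_sets M"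
      using z by (intro null_sets_UN) (auto simp: null_sets_def)
    moreover have "{x\<in>space M. g x \<noteq> 0} \<subseteq> (\<Union>j::nat. {x\<in>space M. 1 / Suc j < \<bar>g x\<bar>})"
    proof
      fix x assume "x \<in> {x\<in>space M. g x \<noteq> 0}"
      then have x: "x \<in> space M" "\<bar>g x\<bar> > 0" by auto
      then obtain j :: nat where "1 / Suc j < \<bar>g x\<bar>" using nat_approx_posE by blast
      then show "x \<in> (\<Union>j::nat. {x\<in>space M. 1 / Suc j < \<bar>g x\<bar>})" using x by blast
    qed
    moreover have "{x\<in>space M. g x \<noteq> 0} \<in> sets M" by measurable
    ultimately have "{x\<in>space M. g x \<noteq> 0} \<in> null_sets M"
      using null_sets_subset by blast
    then show False using pos by auto
  qed
  define \<epsilon> :: real where "\<epsilon> = 1 / Suc j"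
  have \<epsilon>pos: "\<epsilon> > 0" by (simp add: \<epsilon>_def)
  define E where "E = {x\<in>space M. \<epsilon> < \<bar>g x\<bar>}"
  have E[measurable]: "E \<in> sets M" unfolding E_def by measurable
  define q where "q = measure M (space M - E)"
  have q0: "0 \<le> q" by (simp add: q_def)
  have "measure M E > 0" using j E by (simp add: E_def \<epsilon>_def M.emeasure_eq_measure zero_less_measure_iff)
  then have q1: "q < 1" unfolding q_def using M.prob_compl[OF E] by simp
  define N where "N n = {\<omega>\<in>space S. \<forall>k. n \<le> k \<longrightarrow> \<omega> k \<notin> E}" for n
  have N[measurable]: "N n \<in> sets S" for n unfolding N_def by measurable
  have Nnull: "N n \<in> null_sets S" for n
  proof -
    have le: "measure S (N n) \<le> q ^ m" for m
    proof -
      have "N n \<subseteq> {\<omega>\<in>space S. \<forall>i\<in>{n..<n+m}. \<omega> i \<in> space M - E}"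
        unfolding N_def by (auto simp: space_PiM PiE_iff)
      then have "measure S (N n) \<le> measure S {\<omega>\<in>space S. \<forall>i\<in>{n..<n+m}. \<omega> i \<in> space M - E}"
        by (intro P.finite_measure_mono) measurable
      also have "\<dots> = q ^ m"
      proof -
        have "emeasure S {\<omega>\<in>space S. \<forall>i\<in>{n..<n+m}. \<omega> i \<in> space M - E} = (\<Prod>i\<in>{n..<n+m}. emeasure M (space M - E))"
          by (rule emeasure_PiM_Collect) auto
        also have "\<dots> = ennreal (q ^ m)"
          by (simp add: q_def M.emeasure_eq_measure ennreal_power)
        finally show ?thesis using q0 by (simp add: P.emeasure_eq_measure)
      qed
      finally show ?thesis .
    qed
    have "measure S (N n) \<le> 0"
      using q0 q1 le by (intro tendsto_le[OF sequentially_bot LIMSEQ_power_zero[of q] tendsto_const]) auto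
    then have "measure S (N n) = 0" using measure_nonneg[of S "N n"] by linarith
    then show ?thesis using N by (simp add: P.emeasure_eq_measure null_sets_def)
  qed
  have "AE \<omega> in S. \<omega> \<notin> (\<Union>n. N n)"
    using null_sets_UN[OF Nnull] by (rule AE_not_in)
  moreover have "AE \<omega> in S. \<omega> \<in> space S" by simp
  ultimately have "AE \<omega> in S. False"
    using AEt
  proof eventually_elim
    case (elim \<omega>)
    from elim(3) have "eventually (\<lambda>k. \<bar>g (\<omega> k)\<bar> < \<epsilon>) sequentially"
      using \<epsilon>pos by (auto dest: order_tendstoD simp: tendsto_iff dist_real_def)
    then obtain n where n: "\<And>k. n \<le> k \<Longrightarrow> \<bar>g (\<omega> k)\<bar> < \<epsilon>" by (auto simp: eventually_sequentially)
    have "\<omega> \<in> N n" unfolding N_def E_def using elim(2) n by (auto simp: not_less less_imp_le)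
    then show False using elim(1) by blast
  qed
  then show False by (simp add: P.AE_False)
qed


theorem mainTheorem5:
  fixes M :: "'a measure" and A B :: "'a \<Rightarrow> real"
    and AB :: "nat \<Rightarrow> 'a \<Rightarrow> real \<times> real" and r :: real
  assumes "prob_space M"
    and "A \<in> borel_measurable M" and "B \<in> borel_measurable M"
    and "prob_space.indep_vars M (\<lambda>_. borel) AB UNIV"
    and "\<And>n. distr M borel (AB n) = distr M borel (\<lambda>\<omega>. (A \<omega>, B \<omega>))"
    and "AE \<omega> in M. summable (\<lambda>k. (\<Prod>i<k. fst (AB i \<omega>)) * snd (AB k \<omega>))"
    and "measure M {\<omega> \<in> space M. A \<omega> = 0} = 0"
    and "measure M {\<omega> \<in> space M. B \<omega> = 0} < 1"
    and "\<And>c. measure M {\<omega> \<in> space M. B \<omega> + A \<omega> * c = c} < 1"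
    and "measure M {\<omega> \<in> space M. A \<omega> \<in> {0<..1}} = 1"
    and "r > 0"
    and "(\<integral>\<^sup>+ \<omega>. ennreal (exp (r * perpetuity (\<lambda>i \<omega>. fst (AB i \<omega>)) (\<lambda>i \<omega>. snd (AB i \<omega>)) \<omega>)) \<partial>M) < \<infinity>"
  shows "(\<integral>\<^sup>+ \<omega>. ennreal (exp (r * B \<omega>) * indicator {\<omega>. A \<omega> = 1} \<omega>) \<partial>M) < 1"
proof -
  interpret prob_space M by fact
  note [measurable] = assms(2,3)
  have indep: "indep_vars (\<lambda>_. borel) AB UNIV" using assms(4) .
  have rvAB[measurable]: "AB i \<in> borel_measurable M" for i using indep by (simp add: indep_vars_def)
  define \<mu> where "\<mu> = distr M borel (\<lambda>\<omega>. (A \<omega>, B \<omega>))"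
  have ABm[measurable]: "(\<lambda>\<omega>. (A \<omega>, B \<omega>)) \<in> borel_measurable M" by measurable
  interpret mu: prob_space \<mu> unfolding \<mu>_def by (rule prob_space_distr) measurable
  have sets_mu: "sets \<mu> = sets borel" by (simp add: \<mu>_def)
  have [measurable]: "fst \<in> borel_measurable \<mu>" "snd \<in> borel_measurable \<mu>"
    by (simp_all add: measurable_cong_sets[OF sets_mu refl] borel_measurable_continuous_onI continuous_on_fst continuous_on_snd continuous_on_id)
  have [measurable]: "AB i \<in> measurable M \<mu>" for i
    by (simp add: measurable_cong_sets[OF refl sets_mu])
  interpret Sq: sequence_space \<mu> by unfold_locales
  define T where "T \<omega> k = (\<Prod>i<k. fst (\<omega> i)) * snd (\<omega> k)" for \<omega> :: "nat \<Rightarrow> real \<times> real" and k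
  define P where "P \<omega> = (\<Sum>k. T \<omega> k)" for \<omega>
  have Tm[measurable]: "(\<lambda>\<omega>. T \<omega> k) \<in> borel_measurable Sq.S" for k unfolding T_def by measurable
  have Pm[measurable]: "P \<in> borel_measurable Sq.S" unfolding P_def by measurable
  have Xm[measurable]: "(\<lambda>x i. AB i x) \<in> measurable M Sq.S"
    using measurable_restrict[of UNIV "\<lambda>i. AB i" M "\<lambda>_. \<mu>"] by (simp add: restrict_UNIV)
  have D: "distr M Sq.S (\<lambda>x i. AB i x) = Sq.S"
  proof -
    have "distr M (\<Pi>\<^sub>M i\<in>UNIV. borel) (\<lambda>x. \<lambda>i\<in>UNIV. AB i x) = (\<Pi>\<^sub>M i\<in>UNIV. distr M borel (AB i))"
      using indep_vars_iff_distr_eq_PiM[of UNIV AB "\<lambda>_. borel"] indep by simp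
    also have "\<dots> = Sq.S" unfolding \<mu>_def using assms(5) by (intro PiM_cong) auto
    also have "distr M (\<Pi>\<^sub>M i\<in>UNIV. borel) (\<lambda>x. \<lambda>i\<in>UNIV. AB i x) = distr M Sq.S (\<lambda>x i. AB i x)"
      by (intro distr_cong sets_PiM_cong) (auto simp: sets_mu)
    finally show ?thesis .
  qed
  have transfer: "(\<integral>\<^sup>+x. f (\<lambda>i. AB i x) \<partial>M) = (\<integral>\<^sup>+\<omega>. f \<omega> \<partial>Sq.S)" if [measurable]: "f \<in> borel_measurable Sq.S" for f
    using nn_integral_distr[OF Xm, of f] D that by simp
  define \<phi> where "\<phi> = (\<integral>\<^sup>+\<omega>. ennreal (exp (r * P \<omega>)) \<partial>Sq.S)"
  have \<phi>fin: "\<phi> < \<infinity>"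
  proof -
    have "\<phi> = (\<integral>\<^sup>+ \<omega>. ennreal (exp (r * perpetuity (\<lambda>i \<omega>. fst (AB i \<omega>)) (\<lambda>i \<omega>. snd (AB i \<omega>)) \<omega>)) \<partial>M)"
      unfolding \<phi>_def by (subst transfer[symmetric]) (auto simp: perpetuity_def P_def T_def)
    then show ?thesis using assms(12) by simp
  qed
  have AEs: "AE \<omega> in Sq.S. summable (T \<omega>)"
  proof -
    have "AE x in M. summable (T (\<lambda>i. AB i x))" using assms(6) by (simp add: T_def[abs_def])
    then have "AE \<omega> in distr M Sq.S (\<lambda>x i. AB i x). summable (T \<omega>)"
      by (subst AE_distr_iff) (auto simp: T_def)
    then show ?thesis unfolding D .
  qed
  interpret PS: pair_sigma_finite \<mu> Sq.S ..
  define Hf where "Hf s \<omega> = ennreal (exp (r * (snd s + fst s * P \<omega>)))" for s :: "real\<times>real" and \<omega>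
  have Hm[measurable]: "(\<lambda>z. Hf (fst z) (snd z)) \<in> borel_measurable (\<mu> \<Otimes>\<^sub>M Sq.S)" unfolding Hf_def by measurable
  have Im[measurable]: "(\<lambda>s. \<integral>\<^sup>+\<omega>. Hf s \<omega> \<partial>Sq.S) \<in> borel_measurable \<mu>"
    using Sq.P.borel_measurable_nn_integral_fst[OF Hm] by simp
  have cnm[measurable]: "(\<lambda>(s, \<omega>). case_nat s \<omega>) \<in> measurable (\<mu> \<Otimes>\<^sub>M Sq.S) Sq.S" by measurable
  have step1: "\<phi> = (\<integral>\<^sup>+s. \<integral>\<^sup>+\<omega>. Hf s \<omega> \<partial>Sq.S \<partial>\<mu>)"
  proof -
    have "\<phi> = (\<integral>\<^sup>+\<omega>. ennreal (exp (r * P \<omega>)) \<partial>distr (\<mu> \<Otimes>\<^sub>M Sq.S) Sq.S (\<lambda>(s, \<omega>). case_nat s \<omega>))"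
      unfolding \<phi>_def Sq.PiM_iter ..
    also have "\<dots> = (\<integral>\<^sup>+z. ennreal (exp (r * P (case_nat (fst z) (snd z)))) \<partial>(\<mu> \<Otimes>\<^sub>M Sq.S))"
      by (subst nn_integral_distr) (auto simp: split_beta)
    also have "\<dots> = (\<integral>\<^sup>+z. Hf (fst z) (snd z) \<partial>(\<mu> \<Otimes>\<^sub>M Sq.S))"
    proof (rule nn_integral_cong_AE)
      have "AE z in \<mu> \<Otimes>\<^sub>M Sq.S. summable (T ((\<lambda>(s, \<omega>). case_nat s \<omega>) z))"
        by (rule AE_distrD[OF cnm]) (unfold Sq.PiM_iter, rule AEs)
      then show "AE z in \<mu> \<Otimes>\<^sub>M Sq.S. ennreal (exp (r * P (case_nat (fst z) (snd z)))) = Hf (fst z) (snd z)"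
      proof eventually_elim
        case (elim z)
        then have "summable (\<lambda>k. (\<Prod>i<k. fst (case_nat (fst z) (snd z) i)) * snd (case_nat (fst z) (snd z) k))"
          by (simp add: T_def[abs_def] split_beta)
        from perp_shift[OF this] show ?case by (simp add: Hf_def P_def T_def[abs_def])
      qed
    qed
    also have "\<dots> = (\<integral>\<^sup>+s. \<integral>\<^sup>+\<omega>. Hf s \<omega> \<partial>Sq.S \<partial>\<mu>)"
      using Sq.P.nn_integral_fst[OF Hm] by simp
    finally show ?thesis .
  qed
  define c where "c = (\<integral>\<^sup>+s. indicator {s. fst s = 1} s * ennreal (exp (r * snd s)) \<partial>\<mu>)"
  define R where "R = (\<integral>\<^sup>+s. indicator {s. fst s \<noteq> 1} s * (\<integral>\<^sup>+\<omega>. Hf s \<omega> \<partial>Sq.S) \<partial>\<mu>)"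
  have step2: "\<phi> = c * \<phi> + R"
  proof -
    have pt: "(\<integral>\<^sup>+\<omega>. Hf s \<omega> \<partial>Sq.S) = indicator {s. fst s = 1} s * ennreal (exp (r * snd s)) * \<phi> + indicator {s. fst s \<noteq> 1} s * (\<integral>\<^sup>+\<omega>. Hf s \<omega> \<partial>Sq.S)" for s
    proof (cases "fst s = 1")
      case True
      then have "(\<integral>\<^sup>+\<omega>. Hf s \<omega> \<partial>Sq.S) = (\<integral>\<^sup>+\<omega>. ennreal (exp (r * snd s)) * ennreal (exp (r * P \<omega>)) \<partial>Sq.S)"
        by (intro nn_integral_cong) (simp add: Hf_def distrib_left exp_add ennreal_mult)
      also have "\<dots> = ennreal (exp (r * snd s)) * \<phi>"
        unfolding \<phi>_def by (rule nn_integral_cmult) measurable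
      finally show ?thesis using True by simp
    qed simp
    have e: "(\<integral>\<^sup>+s. \<integral>\<^sup>+\<omega>. Hf s \<omega> \<partial>Sq.S \<partial>\<mu>) = (\<integral>\<^sup>+s. indicator {s. fst s = 1} s * ennreal (exp (r * snd s)) * \<phi> + indicator {s. fst s \<noteq> 1} s * (\<integral>\<^sup>+\<omega>. Hf s \<omega> \<partial>Sq.S) \<partial>\<mu>)"
      by (intro nn_integral_cong) (rule pt)
    have "\<phi> = (\<integral>\<^sup>+s. indicator {s. fst s = 1} s * ennreal (exp (r * snd s)) * \<phi> + indicator {s. fst s \<noteq> 1} s * (\<integral>\<^sup>+\<omega>. Hf s \<omega> \<partial>Sq.S) \<partial>\<mu>)"
      using step1 e by (rule trans)
    also have "\<dots> = (\<integral>\<^sup>+s. indicator {s. fst s = 1} s * ennreal (exp (r * snd s)) * \<phi> \<partial>\<mu>) + R"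
      unfolding R_def by (rule nn_integral_add) measurable
    also have "(\<integral>\<^sup>+s. indicator {s. fst s = 1} s * ennreal (exp (r * snd s)) * \<phi> \<partial>\<mu>) = c * \<phi>"
      unfolding c_def by (rule nn_integral_multc) measurable
    finally show ?thesis .
  qed
  have c_eq: "c = (\<integral>\<^sup>+ \<omega>. ennreal (exp (r * B \<omega>) * indicator {\<omega>. A \<omega> = 1} \<omega>) \<partial>M)"
  proof -
    have cm: "(\<lambda>s. indicator {s. fst s = 1} s * ennreal (exp (r * snd s))) \<in> borel_measurable \<mu>" by measurable
    then have cm': "(\<lambda>s::real\<times>real. indicator {s. fst s = 1} s * ennreal (exp (r * snd s))) \<in> borel_measurable borel"
      using measurable_cong_sets[OF sets_mu refl] by blast
    have "c = (\<integral>\<^sup>+x. (\<lambda>s::real\<times>real. indicator {s. fst s = 1} s * ennreal (exp (r * snd s))) (A x, B x) \<partial>M)"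
      unfolding c_def \<mu>_def
      apply (rule nn_integral_distr[OF ABm])
      apply (subst measurable_cong_sets[OF sets_distr refl])
      apply (rule cm')
      done
    then show ?thesis by (auto intro!: nn_integral_cong simp: indicator_def)
  qed
  have Ipos: "(\<integral>\<^sup>+\<omega>. Hf s \<omega> \<partial>Sq.S) \<noteq> 0" for s
  proof
    assume "(\<integral>\<^sup>+\<omega>. Hf s \<omega> \<partial>Sq.S) = 0"
    then have "AE \<omega> in Sq.S. Hf s \<omega> = 0" proof (subst (asm) nn_integral_0_iff_AE)
      show "Hf s \<in> borel_measurable Sq.S" unfolding Hf_def[abs_def] by measurable
    qed
    then have "AE \<omega> in Sq.S. False" by (simp add: Hf_def)
    then show False by (simp add: Sq.P.AE_False)
  qed
  have Rpos: "R \<noteq> 0"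
  proof
    assume "R = 0"
    then have "AE s in \<mu>. indicator {s. fst s \<noteq> 1} s * (\<integral>\<^sup>+\<omega>. Hf s \<omega> \<partial>Sq.S) = 0"
      unfolding R_def by (subst (asm) nn_integral_0_iff_AE) measurable
    then have AE1: "AE s in \<mu>. fst s = 1"
      by eventually_elim (use Ipos in \<open>auto simp: indicator_def split: if_splits\<close>)
    then have "AE \<omega> in Sq.S. \<forall>i. fst (\<omega> i) = 1"
      by (subst AE_all_countable) (auto intro: Sq.AE_component)
    with AEs have "AE \<omega> in Sq.S. (\<lambda>k. snd (\<omega> k)) \<longlonglongrightarrow> 0"
      by eventually_elim (auto dest!: summable_LIMSEQ_zero simp: T_def[abs_def])
    moreover have "emeasure \<mu> {x\<in>space \<mu>. snd x \<noteq> 0} \<noteq> 0"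
    proof -
      have "emeasure \<mu> {x\<in>space \<mu>. snd x \<noteq> 0} = emeasure M {\<omega>\<in>space M. B \<omega> \<noteq> 0}"
      proof -
        have "{x \<in> space \<mu>. snd x \<noteq> 0} \<in> sets \<mu>" by measurable
        then have sm: "{x::real\<times>real. snd x \<noteq> 0} \<in> sets borel" by (simp add: \<mu>_def)
        show ?thesis
          unfolding \<mu>_def by (subst emeasure_distr) (use sm in \<open>auto intro!: arg_cong[where f="emeasure M"]\<close>)
      qed
      also have "{\<omega>\<in>space M. B \<omega> \<noteq> 0} = space M - {\<omega>\<in>space M. B \<omega> = 0}" by auto
      also have "emeasure M \<dots> = ennreal (1 - prob {\<omega>\<in>space M. B \<omega> = 0})"
        by (subst emeasure_eq_measure, subst prob_compl) (auto, measurable)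
      finally show ?thesis using assms(8) by simp
    qed
    ultimately show False using Sq.not_AE_tendsto_zero[of snd] by auto
  qed
  have cf: "c < 1"
  proof (rule ccontr)
    assume "\<not> c < 1"
    then have "1 \<le> c" by simp
    then have "\<phi> + R \<le> c * \<phi> + R" by (intro add_right_mono) (metis mult_1 mult_right_mono zero_le)
    then have "\<phi> + R \<le> \<phi> + 0" using step2 by simp
    then have "R \<le> 0" using \<phi>fin by (auto simp: ennreal_add_left_cancel_le)
    then show False using Rpos by simp
  qed
  then show ?thesis using c_eq by simp
qed

end
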